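(* Let $n\geq 2$, $c\geq 2$, and let $L_{n,c}$ be the free metabelian nilpotent Lie algebra of nilpotency class $c$ generated by $x_1,\ldots,x_n$ over a field $K$ of characteristic zero. Let $u=\sum_{i=1}^n\alpha_ix_i$ with $\alpha_i\in K$ and let $v=\sum_{i=1}^n x_i$. If $[u,v]\in L_{n,c}^{S_n}$, then $u=\alpha v$ for some $\alpha\in K$.
   Context: $L_{n,c}=L_n/(L_n''+\gamma^{c+1}(L_n))$, where $L_n$ is the free Lie algebra on $x_1,\ldots,x_n$, $\gamma^1(L_n)=L_n$, $\gamma^k(L_n)=[\gamma^{k-1}(L_n),L_n]$, and $L_n''=[L_n',L_n']$ with $L_n'=[L_n,L_n]$. The symmetric group $S_n$ acts on $L_{n,c}$ by $\pi\, p(x_1,\ldots,x_n)=p(x_{\pi(1)},\ldots,x_{\pi(n)})$, and $L_{n,c}^{S_n}$ is the algebra of elements fixed by all $\pi\in S_n$ (symmetric polynomials). *)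

theory Defs
  imports Main "HOL-Combinatorics.Permutations"
begin

text \<open>Noncommutative polynomials (the free associative algebra K<x_0,x_1,...>) are
  modelled as coefficient functions on words (lists of variable indices).
  The free Lie algebra L_n is the Lie subalgebra generated by x_0,...,x_(n-1)
  inside it (Witt's theorem).\<close>

type_synonym 'a ncpoly = "nat list \<Rightarrow> 'a"

definition nc_zero :: "'a::field ncpoly" where
  "nc_zero = (\<lambda>w. 0)"

definition nc_add :: "'a::field ncpoly \<Rightarrow> 'a ncpoly \<Rightarrow> 'a ncpoly" where
  "nc_add p q = (\<lambda>w. p w + q w)"

definition nc_diff :: "'a::field ncpoly \<Rightarrow> 'a ncpoly \<Rightarrow> 'a ncpoly" where
  "nc_diff p q = (\<lambda>w. p w - q w)"

definition nc_smult :: "'a::field \<Rightarrow> 'a ncpoly \<Rightarrow> 'a ncpoly" where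
  "nc_smult c p = (\<lambda>w. c * p w)"

definition nc_mult :: "'a::field ncpoly \<Rightarrow> 'a ncpoly \<Rightarrow> 'a ncpoly" where
  "nc_mult p q = (\<lambda>w. \<Sum>k\<le>length w. p (take k w) * q (drop k w))"

definition lie_bracket :: "'a::field ncpoly \<Rightarrow> 'a ncpoly \<Rightarrow> 'a ncpoly" where
  "lie_bracket p q = nc_diff (nc_mult p q) (nc_mult q p)"

text \<open>The generator x_i (indices 0,...,n-1 stand for x_1,...,x_n).\<close>
definition gen :: "nat \<Rightarrow> 'a::field ncpoly" where
  "gen i = (\<lambda>w. if w = [i] then 1 else 0)"

inductive_set lin_span :: "'a::field ncpoly set \<Rightarrow> 'a ncpoly set" for S where
  zero: "nc_zero \<in> lin_span S"
| base: "p \<in> S \<Longrightarrow> p \<in> lin_span S"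
| add: "p \<in> lin_span S \<Longrightarrow> q \<in> lin_span S \<Longrightarrow> nc_add p q \<in> lin_span S"
| smult: "p \<in> lin_span S \<Longrightarrow> nc_smult c p \<in> lin_span S"

inductive_set free_lie :: "nat \<Rightarrow> 'a::field ncpoly set" for n where
  zero: "nc_zero \<in> free_lie n"
| gen: "i < n \<Longrightarrow> gen i \<in> free_lie n"
| add: "p \<in> free_lie n \<Longrightarrow> q \<in> free_lie n \<Longrightarrow> nc_add p q \<in> free_lie n"
| smult: "p \<in> free_lie n \<Longrightarrow> nc_smult c p \<in> free_lie n"
| bracket: "p \<in> free_lie n \<Longrightarrow> q \<in> free_lie n \<Longrightarrow> lie_bracket p q \<in> free_lie n"

definition brackets :: "'a::field ncpoly set \<Rightarrow> 'a ncpoly set \<Rightarrow> 'a ncpoly set" where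
  "brackets A B = {lie_bracket a b | a b. a \<in> A \<and> b \<in> B}"

definition derived1 :: "nat \<Rightarrow> 'a::field ncpoly set" where
  "derived1 n = lin_span (brackets (free_lie n) (free_lie n))"

definition derived2 :: "nat \<Rightarrow> 'a::field ncpoly set" where
  "derived2 n = lin_span (brackets (derived1 n) (derived1 n))"

text \<open>Lower central series, shifted: lcs n k = gamma^(k+1)(L_n).\<close>
primrec lcs :: "nat \<Rightarrow> nat \<Rightarrow> 'a::field ncpoly set" where
  "lcs n 0 = free_lie n"
| "lcs n (Suc k) = lin_span (brackets (lcs n k) (free_lie n))"

text \<open>The ideal L_n'' + gamma^(c+1)(L_n); L_(n,c) = L_n / this ideal.\<close>
definition mnil_ideal :: "nat \<Rightarrow> nat \<Rightarrow> 'a::field ncpoly set" where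
  "mnil_ideal n c = {nc_add p q | p q. p \<in> derived2 n \<and> q \<in> lcs n c}"

definition Lnc_eq :: "nat \<Rightarrow> nat \<Rightarrow> 'a::field ncpoly \<Rightarrow> 'a ncpoly \<Rightarrow> bool" where
  "Lnc_eq n c p q \<longleftrightarrow> nc_diff p q \<in> mnil_ideal n c"

text \<open>Action of a permutation: p(x_1,...,x_n) maps to p(x_pi(1),...,x_pi(n)),
  i.e. each letter i of a word is replaced by pi i.\<close>
definition perm_act :: "(nat \<Rightarrow> nat) \<Rightarrow> 'a::field ncpoly \<Rightarrow> 'a ncpoly" where
  "perm_act \<pi> p = (\<lambda>w. p (map (inv \<pi>) w))"

definition Lnc_symmetric :: "nat \<Rightarrow> nat \<Rightarrow> 'a::field ncpoly \<Rightarrow> bool" where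
  "Lnc_symmetric n c p \<longleftrightarrow> (\<forall>\<pi>. \<pi> permutes {..<n} \<longrightarrow> Lnc_eq n c (perm_act \<pi> p) p)"

end

theory Submission
  imports Defs
begin

definition low :: "nat \<Rightarrow> 'a::field ncpoly \<Rightarrow> bool" where
  "low k p \<longleftrightarrow> (\<forall>w. length w \<le> k \<longrightarrow> p w = 0)"

lemma low_span: "p \<in> lin_span S \<Longrightarrow> (\<And>q. q \<in> S \<Longrightarrow> low k q) \<Longrightarrow> low k p"
  by (induction rule: lin_span.induct)
     (auto simp: low_def nc_zero_def nc_add_def nc_smult_def)

lemma low_mult: assumes "low a p" "low b q" shows "low (a+b+1) (nc_mult p q)"
  unfolding low_def nc_mult_def
proof (intro allI impI)
  fix w :: "nat list" assume l: "length w \<le> a+b+1"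
  show "(\<Sum>k\<le>length w. p (take k w) * q (drop k w)) = 0"
  proof (rule sum.neutral, intro ballI)
    fix k assume "k \<in> {..length w}"
    show "p (take k w) * q (drop k w) = 0"
    proof (cases "k \<le> a")
      case True then show ?thesis using assms(1) by (simp add: low_def)
    next
      case False then have "length (drop k w) \<le> b" using l by simp
      then show ?thesis using assms(2) by (simp add: low_def)
    qed
  qed
qed

lemma low_bracket: "low a p \<Longrightarrow> low b q \<Longrightarrow> low (a+b+1) (lie_bracket p q)"
proof -
  assume h: "low a p" "low b q"
  have 1: "low (a+b+1) (nc_mult p q)" using low_mult[OF h] .
  have 2: "low (b+a+1) (nc_mult q p)" using low_mult[OF h(2) h(1)] .
  show ?thesis using 1 2 unfolding low_def lie_bracket_def nc_diff_def
    by (simp add: add.commute)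
qed

lemma low_mono: "low k p \<Longrightarrow> j \<le> k \<Longrightarrow> low j p"
  unfolding low_def by simp

lemma low_free: "p \<in> free_lie n \<Longrightarrow> low 0 p"
proof (induction rule: free_lie.induct)
  case (bracket p q)
  have "low (0+0+1) (lie_bracket p q)" by (rule low_bracket[OF bracket.IH])
  then show ?case by (rule low_mono) simp
qed (auto simp: low_def nc_zero_def gen_def nc_add_def nc_smult_def)

lemma low_brackets:
  assumes "\<And>x. x \<in> A \<Longrightarrow> low a x" "\<And>x. x \<in> B \<Longrightarrow> low b x"
    "p \<in> lin_span (brackets A B)"
  shows "low (a+b+1) p"
  using assms(3)
proof (rule low_span)
  fix q assume "q \<in> brackets A B"
  then obtain x y where "q = lie_bracket x y" "x \<in> A" "y \<in> B"
    unfolding brackets_def by blast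
  then show "low (a+b+1) q" using low_bracket assms(1,2) by blast
qed

lemma low_lcs: "p \<in> lcs n k \<Longrightarrow> low k p"
proof (induction k arbitrary: p)
  case 0 then show ?case using low_free by simp
next
  case (Suc k)
  have "low (k+0+1) p"
    by (rule low_brackets[where A="lcs n k" and B="free_lie n"])
       (use Suc low_free in auto)
  then show ?case by simp
qed

lemma low_d1: "p \<in> derived1 n \<Longrightarrow> low 1 p"
proof -
  assume "p \<in> derived1 n"
  then have "low (0+0+1) p" unfolding derived1_def
    by (intro low_brackets[where A="free_lie n" and B="free_lie n"]) (auto intro: low_free)
  then show ?thesis by simp
qed

lemma low_d2: "p \<in> derived2 n \<Longrightarrow> low 3 p"
proof -
  assume "p \<in> derived2 n"
  then have "low (1+1+1) p" unfolding derived2_def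
    by (intro low_brackets[where A="derived1 n" and B="derived1 n"]) (auto intro: low_d1[unfolded One_nat_def])
  moreover have "(1+1+1::nat) = 3" by simp
  ultimately show ?thesis by metis
qed

lemma low_ideal: assumes "p \<in> mnil_ideal n c" "c \<ge> 2" shows "low 2 p"
proof -
  obtain a b where p: "p = nc_add a b" "a \<in> derived2 n" "b \<in> lcs n c"
    using assms(1) by (auto simp: mnil_ideal_def)
  have "low 2 a" using low_d2[OF p(2)] low_mono by fastforce
  moreover have "low 2 b" using low_lcs[OF p(3)] assms(2) low_mono by fastforce
  ultimately show ?thesis by (auto simp: low_def p(1) nc_add_def)
qed

lemma zero_lcs: "nc_zero \<in> lcs n k"
  by (cases k) (auto intro: free_lie.zero lin_span.zero)

lemma zero_ideal: "nc_zero \<in> mnil_ideal n c"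
proof -
  have "nc_add nc_zero nc_zero = (nc_zero :: 'a::field ncpoly)"
    by (simp add: nc_add_def nc_zero_def)
  moreover have "nc_zero \<in> derived2 n" unfolding derived2_def by (rule lin_span.zero)
  moreover have "nc_zero \<in> lcs n c" by (rule zero_lcs)
  ultimately show ?thesis unfolding mnil_ideal_def by (metis (mono_tags, lifting) mem_Collect_eq)
qed

lemma sum_gen: "(\<Sum>l<n. f l * gen l [i]) = (if i < n then f i else 0)"
  by (simp add: gen_def if_distrib[of "\<lambda>x. _ * x"] cong: if_cong)

lemma sum_gen_nil: "(\<Sum>l<n. f l * gen l []) = 0"
  by (simp add: gen_def)

lemma sum_gen_2: "(\<Sum>l<n. f l * gen l [i,j]) = 0"
  by (simp add: gen_def)

theorem lemma2p2:
  fixes \<alpha> :: "nat \<Rightarrow> 'a::field_char_0" and n c :: nat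
  assumes "n \<ge> 2" and "c \<ge> 2"
    and "Lnc_symmetric n c
           (lie_bracket (\<lambda>w. \<Sum>i<n. \<alpha> i * gen i w) (\<lambda>w. \<Sum>i<n. gen i w))"
  shows "\<exists>a::'a. Lnc_eq n c (\<lambda>w. \<Sum>i<n. \<alpha> i * gen i w)
                          (nc_smult a (\<lambda>w. \<Sum>i<n. gen i w))"
proof -
  define u :: "'a ncpoly" where "u = (\<lambda>w. \<Sum>i<n. \<alpha> i * gen i w)"
  define v :: "'a ncpoly" where "v = (\<lambda>w. \<Sum>i<n. gen i w)"
  define B where "B = lie_bracket u v"
  have v1: "v = (\<lambda>w. \<Sum>i<n. 1 * gen i w)" by (simp add: v_def)
  have B2: "B [i,j] = \<alpha> i - \<alpha> j" if "i < n" "j < n" for i j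
  proof -
    have s3: "(\<Sum>k\<le>length [i,j]. f k) = f 0 + f 1 + f 2" for f :: "nat \<Rightarrow> 'a"
      by (simp add: numeral_2_eq_2 atMost_Suc)
    have u0: "u [] = 0" and v0: "v [] = 0" and u2: "u [i,j] = 0" and v2: "v [i,j] = 0"
      and ui: "u [i] = \<alpha> i" and uj: "u [j] = \<alpha> j" and vi: "v [i] = 1" and vj: "v [j] = 1"
      using sum_gen_nil[where f=\<alpha> and n=n] sum_gen_nil[where f="\<lambda>_. 1" and n=n]
        sum_gen_2[where f=\<alpha> and n=n and i=i and j=j] sum_gen_2[where f="\<lambda>_. 1" and n=n and i=i and j=j]
        sum_gen[where f=\<alpha> and n=n and i=i] sum_gen[where f=\<alpha> and n=n and i=j]
        sum_gen[where f="\<lambda>_. 1" and n=n and i=i] sum_gen[where f="\<lambda>_. 1" and n=n and i=j] that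
      unfolding u_def v_def by simp_all
    have "nc_mult u v [i,j] = \<alpha> i" and "nc_mult v u [i,j] = \<alpha> j"
      unfolding nc_mult_def s3 using u0 v0 u2 v2 ui uj vi vj by simp_all
    then show ?thesis by (simp add: B_def lie_bracket_def nc_diff_def)
  qed
  have const: "\<alpha> i = \<alpha> j" if "i < n" "j < n" for i j
  proof -
    have "transpose i j permutes {..<n}" using that by (intro permutes_swap_id) auto
    then have "Lnc_eq n c (perm_act (transpose i j) B) B"
      using assms(3) by (simp add: Lnc_symmetric_def B_def u_def v_def)
    then have "low 2 (nc_diff (perm_act (transpose i j) B) B)"
      using low_ideal assms(2) by (auto simp: Lnc_eq_def)
    then have "B [j,i] - B [i,j] = 0"
      by (auto simp: low_def nc_diff_def perm_act_def dest!: spec[of _ "[i,j]"])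
    then have "(\<alpha> j - \<alpha> i) - (\<alpha> i - \<alpha> j) = 0" using B2 that by simp
    then show ?thesis by simp
  qed
  have n0: "0 < n" using assms(1) by simp
  have "nc_diff u (nc_smult (\<alpha> 0) v) = nc_zero"
  proof (rule ext)
    fix w
    have "(\<Sum>i<n. \<alpha> i * gen i w) = (\<Sum>i<n. \<alpha> 0 * gen i w)"
    proof (rule sum.cong)
      fix x assume "x \<in> {..<n}"
      then have "\<alpha> x = \<alpha> 0" by (intro const n0) simp
      then show "\<alpha> x * gen x w = \<alpha> 0 * gen x w" by simp
    qed simp
    also have "\<dots> = \<alpha> 0 * (\<Sum>i<n. gen i w)" by (rule sum_distrib_left[symmetric])
    finally have "u w = \<alpha> 0 * v w" unfolding u_def v_def .
    then show "nc_diff u (nc_smult (\<alpha> 0) v) w = nc_zero w"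
      unfolding nc_diff_def nc_smult_def nc_zero_def by simp
  qed
  then have "Lnc_eq n c u (nc_smult (\<alpha> 0) v)"
    unfolding Lnc_eq_def using zero_ideal by metis
  then have "Lnc_eq n c (\<lambda>w. \<Sum>i<n. \<alpha> i * gen i w) (nc_smult (\<alpha> 0) (\<lambda>w. \<Sum>i<n. gen i w))"
    unfolding u_def v_def .
  then show ?thesis by (rule exI)
qed

end
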